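(* Let $1\le k\le n-2$ and let $\Sigma=\mathbb{S}^k\times\mathbb{R}^{n-k}\subset\mathbb{R}^{n+1}$ be a self-shrinker, with $r=|\vec x|$ where $\vec x$ are Euclidean coordinates on the $\mathbb{R}^{n-k}$ factor. Then both regions $\{r<\sqrt{2(n-k)}\}$ and $\{r>\sqrt{2(n-k)}\}$ are stable, and $\{r=\sqrt{2(n-k)}\}$ is the unique rotationally symmetric hypersurface of the form $\{r=C\}$, $C>0$, that splits $\Sigma$ into two stable regions $\{r<C\}$ and $\{r>C\}$.
   Context: $\mathbb{S}^k$ is the round sphere of radius $\sqrt{2k}$ centered at the origin of $\mathbb{R}^{k+1}$. Stability operator: $Lf=\Delta f-\tfrac12\langle\vec x,\nabla f\rangle+(|A|^2+\tfrac12)f$. A region $\Omega$ is stable if there exists a function $u$ with $Lu=0$ and $u>0$ on $\Omega$. *)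

theory Defs
  imports "HOL-Analysis.Analysis"
begin

text \<open>Ambient space R^(n+1) = R^(k+1) x R^(n-k), realised as real^'a x real^'b with
  CARD('a) = k+1 and CARD('b) = n-k.  Points are pairs (y, z).\<close>

type_synonym ('a, 'b) pt = "(real ^ 'a) \<times> (real ^ 'b)"

definition kdim :: "('a::finite, 'b::finite) pt itself \<Rightarrow> nat" where
  "kdim _ = CARD('a) - 1"

definition sphR :: "('a::finite, 'b::finite) pt itself \<Rightarrow> real" where
  "sphR T = sqrt (2 * real (kdim T))"

definition Sigma :: "('a::finite, 'b::finite) pt set" where
  "Sigma = {p. norm (fst p) = sphR TYPE(('a,'b) pt)}"

definition rad :: "('a::finite, 'b::finite) pt \<Rightarrow> real" where
  "rad p = norm (snd p)"

text \<open>Nearest-point projection onto Sigma (along the normal lines, which are radial in y).\<close>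
definition proj :: "('a::finite, 'b::finite) pt \<Rightarrow> ('a, 'b) pt" where
  "proj p = ((sphR TYPE(('a,'b) pt) / norm (fst p)) *\<^sub>R fst p, snd p)"

text \<open>Extension of a function on Sigma that is constant along normal lines.\<close>
definition ext :: "(('a::finite, 'b::finite) pt \<Rightarrow> real) \<Rightarrow> ('a, 'b) pt \<Rightarrow> real" where
  "ext u = u \<circ> proj"

definition tube :: "('a::finite, 'b::finite) pt set \<Rightarrow> ('a, 'b) pt set" where
  "tube \<Omega> = {p. fst p \<noteq> 0 \<and> proj p \<in> \<Omega>}"

definition pd :: "('v::real_normed_vector \<Rightarrow> real) \<Rightarrow> 'v \<Rightarrow> 'v \<Rightarrow> real" where
  "pd g v x = deriv (\<lambda>t. g (x + t *\<^sub>R v)) 0"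

definition has_pd :: "('v::real_normed_vector \<Rightarrow> real) \<Rightarrow> 'v \<Rightarrow> 'v \<Rightarrow> bool" where
  "has_pd g v x \<longleftrightarrow> (\<lambda>t. g (x + t *\<^sub>R v)) field_differentiable (at 0)"

definition C2_on :: "'v::euclidean_space set \<Rightarrow> ('v \<Rightarrow> real) \<Rightarrow> bool" where
  "C2_on S g \<longleftrightarrow> open S \<and> continuous_on S g \<and>
     (\<forall>b\<in>Basis. (\<forall>x\<in>S. has_pd g b x) \<and> continuous_on S (pd g b)) \<and>
     (\<forall>b\<in>Basis. \<forall>c\<in>Basis. (\<forall>x\<in>S. has_pd (pd g b) c x) \<and> continuous_on S (pd (pd g b) c))"

definition eLap :: "('v::euclidean_space \<Rightarrow> real) \<Rightarrow> 'v \<Rightarrow> real" where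
  "eLap g x = (\<Sum>b\<in>Basis. pd (pd g b) b x)"

definition pos_grad :: "('v::euclidean_space \<Rightarrow> real) \<Rightarrow> 'v \<Rightarrow> real" where
  "pos_grad g x = (\<Sum>b\<in>Basis. (x \<bullet> b) * pd g b x)"

text \<open>|A|^2 of Sigma: k principal curvatures equal to 1/sqrt(2k), the others 0.\<close>
definition normA2 :: "('a::finite, 'b::finite) pt itself \<Rightarrow> real" where
  "normA2 T = real (kdim T) * (1 / sphR T)\<^sup>2"

text \<open>Stability operator L f = Delta_Sigma f - 1/2 <x, grad f> + (|A|^2 + 1/2) f on Sigma.
  Since ext u is constant along the normal lines of Sigma (and Sigma has constant mean
  curvature along them), Delta_Sigma u = eLap (ext u) on Sigma and grad_Sigma u = grad (ext u).\<close>
definition Lop :: "(('a::finite, 'b::finite) pt \<Rightarrow> real) \<Rightarrow> ('a, 'b) pt \<Rightarrow> real" where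
  "Lop u p = eLap (ext u) p - (1/2) * pos_grad (ext u) p
             + (normA2 TYPE(('a,'b) pt) + 1/2) * u p"

definition stable :: "('a::finite, 'b::finite) pt set \<Rightarrow> bool" where
  "stable \<Omega> \<longleftrightarrow> (\<exists>u. C2_on (tube \<Omega>) (ext u) \<and> (\<forall>p\<in>\<Omega>. Lop u p = 0 \<and> u p > 0))"

end

theory Submission imports Defs begin

lemma oneD:
  fixes g G1 psi Psi1 :: "real \<Rightarrow> real"
  assumes d: "\<delta> > 0" and t: "t > 0"
    and dg: "\<And>h. \<bar>h\<bar> < \<delta> \<Longrightarrow> (g has_real_derivative G1 h) (at h)"
    and dG: "(G1 has_real_derivative G2) (at 0)"
    and dp: "\<And>h. (psi has_real_derivative Psi1 h) (at h)"
    and dP: "(Psi1 has_real_derivative Psi2) (at 0)"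
    and le: "\<And>h. \<bar>h\<bar> < \<delta> \<Longrightarrow> psi h \<le> t * g h"
    and eq: "psi 0 = t * g 0"
  shows "t * G1 0 = Psi1 0 \<and> Psi2 \<le> t * G2"
proof -
  define phi where "phi h = t * g h - psi h" for h
  have dphi: "(phi has_real_derivative (t * G1 h - Psi1 h)) (at h)" if "\<bar>h\<bar> < \<delta>" for h
    unfolding phi_def[abs_def] using dg[OF that] dp[of h]
    by (auto intro!: derivative_eq_intros)
  have "t * G1 0 - Psi1 0 = 0"
    apply (rule DERIV_local_min[OF dphi[of 0] d])
    using d le eq by (auto simp: phi_def)
  moreover have "Psi2 \<le> t * G2"
  proof (rule ccontr)
    assume "\<not> ?thesis"
    hence neg: "t * G2 - Psi2 < 0" by simp
    have "((\<lambda>h. t * G1 h - Psi1 h) has_real_derivative (t * G2 - Psi2)) (at 0)"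
      using dG dP by (auto intro!: derivative_eq_intros)
    from DERIV_neg_dec_right[OF this neg] obtain d' where d': "d' > 0"
      "\<And>h. h > 0 \<Longrightarrow> h < d' \<Longrightarrow> t * G1 (0 + h) - Psi1 (0 + h) < t * G1 0 - Psi1 0" by blast
    define h where "h = min d' \<delta> / 2"
    have h: "h > 0" "h < d'" "h < \<delta>" using d d' by (auto simp: h_def)
    have "\<exists>z. 0 < z \<and> z < h \<and> phi h - phi 0 = (h - 0) * (t * G1 z - Psi1 z)"
      by (rule MVT2) (use h in \<open>auto intro!: dphi\<close>)
    then obtain z where z: "0 < z" "z < h" "phi h - phi 0 = h * (t * G1 z - Psi1 z)" by auto
    have "t * G1 z - Psi1 z < 0" using d'(2)[of z] z h \<open>t * G1 0 - Psi1 0 = 0\<close> by auto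
    hence "h * (t * G1 z - Psi1 z) < 0" using h by (simp add: mult_pos_neg)
    hence "phi h < phi 0" using z by linarith
    moreover have "phi h \<ge> phi 0" using le[of h] eq h by (auto simp: phi_def)
    ultimately show False by simp
  qed
  ultimately show ?thesis by simp
qed

lemma sum_Basis_prod_real:
  fixes f::"('a::euclidean_space*'b::euclidean_space)\<Rightarrow>real"
  shows "sum f Basis = sum (\<lambda>i. f (i, 0)) Basis + sum (\<lambda>i. f (0, i)) Basis"
proof -
  have "inj_on (\<lambda>u. (u::'a, 0::'b)) Basis" "inj_on (\<lambda>u. (0::'a, u::'b)) Basis"
    by (auto intro!: inj_onI Pair_inject)
  thus ?thesis
    unfolding Basis_prod_def
    by (subst sum.union_disjoint) (auto simp: Basis_prod_def sum.reindex)
qed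

lemma quad_deriv:
  fixes v w :: "'v::real_inner"
  shows "((\<lambda>h. (norm (v + h *\<^sub>R w))\<^sup>2) has_real_derivative (2 * (v \<bullet> w) + 2 * h * (w \<bullet> w))) (at h)"
proof -
  have e: "(norm (v + h *\<^sub>R w))\<^sup>2 = v \<bullet> v + 2 * h * (v \<bullet> w) + h\<^sup>2 * (w \<bullet> w)" for h
    unfolding power2_norm_eq_inner by (simp add: inner_add inner_commute power2_eq_square algebra_simps)
  show ?thesis unfolding e by (auto intro!: derivative_eq_intros simp: power2_eq_square algebra_simps)
qed

lemma kdim_ge1: "CARD('a::finite) \<ge> 2 \<Longrightarrow> kdim TYPE(('a::finite,'b::finite) pt) \<ge> 1"
  by (simp add: kdim_def)

lemma sphR_pos: "CARD('a::finite) \<ge> 2 \<Longrightarrow> sphR TYPE(('a::finite,'b::finite) pt) > 0"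
  using kdim_ge1[where 'a='a and 'b='b] by (simp add: sphR_def)

lemma normA2_half: "CARD('a::finite) \<ge> 2 \<Longrightarrow> normA2 TYPE(('a::finite,'b::finite) pt) = 1/2"
  using kdim_ge1[where 'a='a and 'b='b]
  by (simp add: normA2_def sphR_def power_divide)

lemma snd_proj[simp]: "snd (proj p) = snd p"
  by (simp add: proj_def)

lemma proj_in_Sigma:
  assumes "CARD('a::finite) \<ge> 2" "fst (p::('a::finite,'b::finite) pt) \<noteq> 0"
  shows "proj p \<in> Sigma"
  using sphR_pos[OF assms(1), where 'b='b] assms(2)
  by (simp add: proj_def Sigma_def)

lemma proj_id:
  assumes "CARD('a::finite) \<ge> 2" "(p::('a::finite,'b::finite) pt) \<in> Sigma"
  shows "proj p = p"
  using sphR_pos[OF assms(1), where 'b='b] assms(2)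
  by (cases p) (simp add: proj_def Sigma_def)

lemma Sigma_fst_nz:
  assumes "CARD('a::finite) \<ge> 2" "(p::('a::finite,'b::finite) pt) \<in> Sigma"
  shows "fst p \<noteq> 0"
  using sphR_pos[OF assms(1), where 'b='b] assms(2)
  by (auto simp: Sigma_def)

lemma pd_lin:
  fixes x c :: "('a::finite,'b::finite) pt"
  shows "has_pd (\<lambda>x. \<gamma> * (snd x \<bullet> w)) c x \<and> pd (\<lambda>x. \<gamma> * (snd x \<bullet> w)) c x = \<gamma> * (snd c \<bullet> w)"
proof -
  have D: "((\<lambda>t. \<gamma> * (snd (x + t *\<^sub>R c) \<bullet> w)) has_real_derivative \<gamma> * (snd c \<bullet> w)) (at 0)"
    by (auto intro!: derivative_eq_intros simp: inner_add_left algebra_simps)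
  show ?thesis unfolding has_pd_def pd_def
    using D DERIV_imp_deriv real_differentiable_def field_differentiable_def by blast
qed

lemma inner_0_pair[simp]: "(p::'x::real_inner \<times> 'y::real_inner) \<bullet> (0, i) = snd p \<bullet> i"
  by (cases p) simp

lemma inner_pair_0[simp]: "(p::'x::real_inner \<times> 'y::real_inner) \<bullet> (i, 0) = fst p \<bullet> i"
  by (cases p) simp

lemma pd_const[simp]: "pd (\<lambda>x. c) b x = 0"
  unfolding pd_def by simp

lemma pd_quad:
  fixes x b :: "('a::finite,'b::finite) pt"
  shows "has_pd (\<lambda>x. \<alpha> + \<beta> * (norm (snd x))\<^sup>2) b x \<and> pd (\<lambda>x. \<alpha> + \<beta> * (norm (snd x))\<^sup>2) b x = 2 * \<beta> * (snd x \<bullet> snd b)"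
proof -
  have D: "((\<lambda>t. \<alpha> + \<beta> * (norm (snd (x + t *\<^sub>R b)))\<^sup>2) has_real_derivative 2 * \<beta> * (snd x \<bullet> snd b)) (at 0)"
  proof -
    have Q: "((\<lambda>h. (norm (snd x + h *\<^sub>R snd b))\<^sup>2) has_real_derivative 2 * (snd x \<bullet> snd b)) (at 0)"
      using quad_deriv[where v="snd x" and h=0 and w="snd b"] by simp
    have "((\<lambda>t. \<alpha> + \<beta> * (norm (snd x + t *\<^sub>R snd b))\<^sup>2) has_real_derivative 0 + \<beta> * (2 * (snd x \<bullet> snd b))) (at 0)"
      by (rule DERIV_add[OF DERIV_const DERIV_cmult[OF Q]])
    then show ?thesis by (simp add: algebra_simps)
  qed
  show ?thesis unfolding has_pd_def pd_def
    using D DERIV_imp_deriv real_differentiable_def field_differentiable_def by blast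
qed

lemma pd_quad_fun: "pd (\<lambda>x::('a::finite,'b::finite) pt. \<alpha> + \<beta> * (norm (snd x))\<^sup>2) b = (\<lambda>x. 2 * \<beta> * (snd x \<bullet> snd b))"
  using pd_quad by blast

lemma stable_quad:
  assumes card: "CARD('a::finite) \<ge> 2"
    and \<Omega>: "\<Omega> = {p \<in> (Sigma :: ('a::finite, 'b::finite) pt set). P (rad p)}"
    and opn: "open (tube \<Omega>)"
    and zero: "\<alpha> + 2 * \<beta> * real CARD('b) = 0"
    and pos: "\<And>p. p \<in> \<Omega> \<Longrightarrow> \<alpha> + \<beta> * (rad p)\<^sup>2 > 0"
  shows "stable \<Omega>"
proof -
  define u where "u = (\<lambda>p::('a,'b) pt. \<alpha> + \<beta> * (rad p)\<^sup>2)"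
  have eu: "ext u = (\<lambda>x. \<alpha> + \<beta> * (norm (snd x))\<^sup>2)"
    by (auto simp: ext_def u_def rad_def)
  have C2: "C2_on (tube \<Omega>) (ext u)"
    unfolding C2_on_def eu pd_quad_fun
    using opn pd_quad[THEN conjunct1] pd_lin[THEN conjunct1]
    by (simp add: pd_lin continuous_intros pd_quad)
  have L: "Lop u p = 0" if "p \<in> \<Omega>" for p
  proof -
    have e1: "eLap (ext u) p = 2 * \<beta> * real CARD('b)"
      unfolding eLap_def eu pd_quad_fun
      by (simp add: sum_Basis_prod_real sum_distrib_left[symmetric] pd_lin)
    have e2: "pos_grad (ext u) p = 2 * \<beta> * (rad p)\<^sup>2"
      unfolding pos_grad_def eu pd_quad_fun
      by (simp add: sum_Basis_prod_real rad_def power2_norm_eq_inner euclidean_inner[of "snd p" "snd p"]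
               sum_distrib_left algebra_simps)
    show ?thesis unfolding Lop_def e1 e2 normA2_half[OF card]
      using zero by (simp add: u_def algebra_simps)
  qed
  show ?thesis unfolding stable_def using C2 L pos by (auto simp: u_def)
qed


lemma key:
  fixes \<Omega> :: "('a::finite,'b::finite) pt set" and f fd fdd :: "real \<Rightarrow> real" and pq :: "('a,'b) pt"
  assumes card: "CARD('a) \<ge> 2"
    and df: "\<And>s. (f has_real_derivative fd s) (at s)"
    and df1: "\<And>s. (fd has_real_derivative fdd s) (at s)"
    and Lpos: "\<And>s. s \<ge> 0 \<Longrightarrow> f s > 0 \<Longrightarrow> 4 * s * fdd s + (2 * real CARD('b) - s) * fd s + f s > 0"
    and intv: "\<And>s. s \<ge> 0 \<Longrightarrow> f s > 0 \<Longrightarrow> lo < s \<and> s < hi"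
    and KO: "{p\<in>Sigma. lo \<le> (norm (snd p))\<^sup>2 \<and> (norm (snd p))\<^sup>2 \<le> hi} \<subseteq> \<Omega>"
    and ex: "pq \<in> Sigma" "lo \<le> (norm (snd pq))\<^sup>2" "(norm (snd pq))\<^sup>2 \<le> hi" "f ((norm (snd pq))\<^sup>2) > 0"
    and st: "stable \<Omega>"
  shows False
proof -
  obtain u where C2: "C2_on (tube \<Omega>) (ext u)" and Lu: "\<And>p. p\<in>\<Omega> \<Longrightarrow> Lop u p = 0"
    and up: "\<And>p. p\<in>\<Omega> \<Longrightarrow> u p > 0"
    using st unfolding stable_def by blast
  define sq where "sq p = (norm (snd p))\<^sup>2" for p :: "('a,'b) pt"
  define K where "K = {p\<in>Sigma. lo \<le> sq p \<and> sq p \<le> hi}"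
  have KO': "K \<subseteq> \<Omega>" using KO by (simp add: K_def sq_def)
  have eu: "ext u p = u p" if "p \<in> Sigma" for p using proj_id[OF card that] by (simp add: ext_def)
  have Ktube: "K \<subseteq> tube \<Omega>"
  proof
    fix p assume p: "p \<in> K"
    hence pS: "p \<in> Sigma" by (simp add: K_def)
    thus "p \<in> tube \<Omega>" using KO' p Sigma_fst_nz[OF card pS] proj_id[OF card pS]
      unfolding tube_def by auto
  qed
  have opn: "open (tube \<Omega>)" and cont: "continuous_on (tube \<Omega>) (ext u)"
    using C2 by (auto simp: C2_on_def)
  have contu: "continuous_on K u"
    using continuous_on_subset[OF cont Ktube] eu
    by (rule continuous_on_eq) (auto simp: K_def)
  have compK: "compact K"
  proof -
    have "closed K" unfolding K_def Sigma_def sq_def mem_Collect_eq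
      by (intro closed_Collect_conj closed_Collect_eq closed_Collect_le continuous_intros)
    moreover have "bounded K"
    proof -
      have "norm x \<le> sphR TYPE(('a,'b) pt) + sqrt \<bar>hi\<bar>" if "x \<in> K" for x
      proof -
        have "norm (snd x) = sqrt (sq x)" by (simp add: sq_def)
        also have "\<dots> \<le> sqrt \<bar>hi\<bar>" using that by (auto simp: K_def)
        finally have "norm (snd x) \<le> sqrt \<bar>hi\<bar>" .
        moreover have "norm (fst x) = sphR TYPE(('a,'b) pt)" using that by (auto simp: K_def Sigma_def)
        moreover have "norm x \<le> norm (fst x) + norm (snd x)"
          by (cases x) (simp add: norm_Pair_le)
        ultimately show ?thesis by linarith
      qed
      then show ?thesis unfolding bounded_iff by blast
    qed
    ultimately show ?thesis using compact_eq_bounded_closed by blast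
  qed
  have p1K: "pq \<in> K" using ex by (simp add: K_def sq_def)
  have contf: "continuous_on UNIV f"
    using df by (intro continuous_at_imp_continuous_on) (auto intro: DERIV_isCont)
  define F where "F p = f (sq p) / u p" for p
  have contF: "continuous_on K F"
    unfolding F_def
  proof (intro continuous_on_divide contu)
    show "continuous_on K (\<lambda>x. f (sq x))" unfolding sq_def
      by (intro continuous_on_compose2[OF contf] continuous_intros) auto
    show "\<forall>x\<in>K. u x \<noteq> 0" using KO' up[THEN less_imp_neq] by (metis subsetD)
  qed
  obtain p0 where p0K: "p0 \<in> K" and p0max: "\<And>q. q\<in>K \<Longrightarrow> F q \<le> F p0"
    using continuous_attains_sup[OF compK _ contF] p1K by blast
  define t where "t = F p0"
  have up0: "u p0 > 0" using KO' p0K by (intro up) auto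
  have "u pq > 0" using KO' p1K by (intro up) auto
  hence "F pq > 0" using ex by (auto simp: F_def sq_def)
  hence tpos: "t > 0" using p0max[OF p1K] by (simp add: t_def)
  hence fs0: "f (sq p0) > 0" using up0 by (simp add: t_def F_def zero_less_divide_iff)
  have s0: "lo < sq p0 \<and> sq p0 < hi" using intv[OF _ fs0] by (simp add: sq_def)
  have ineqK: "f (sq q) \<le> t * u q" if "q \<in> K" for q
  proof -
    have "u q > 0" using KO' that by (intro up) auto
    thus ?thesis using p0max[OF that] by (simp add: t_def F_def pos_divide_le_eq mult.commute)
  qed
  have eq0: "f (sq p0) = t * u p0" using up0 by (simp add: t_def F_def)
  have p0S: "p0 \<in> Sigma" using p0K by (simp add: K_def)
  have "open ({q::('a,'b) pt. fst q \<noteq> 0 \<and> lo < sq q \<and> sq q < hi} \<inter> tube \<Omega>)"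
    unfolding sq_def
    by (intro open_Int opn open_Collect_conj open_Collect_neq open_Collect_less continuous_intros)
  moreover have "p0 \<in> {q::('a,'b) pt. fst q \<noteq> 0 \<and> lo < sq q \<and> sq q < hi} \<inter> tube \<Omega>"
    using s0 Sigma_fst_nz[OF card p0S] Ktube p0K by auto
  ultimately obtain \<delta> where dpos: "\<delta> > 0"
    and dball: "ball p0 \<delta> \<subseteq> {q::('a,'b) pt. fst q \<noteq> 0 \<and> lo < sq q \<and> sq q < hi} \<inter> tube \<Omega>"
    using open_contains_ball by blast
  have nb: "f (sq q) \<le> t * ext u q \<and> q \<in> tube \<Omega>" if "dist q p0 < \<delta>" for q
  proof -
    have q: "fst q \<noteq> 0" "lo < sq q" "sq q < hi" "q \<in> tube \<Omega>"
      using dball that by (auto simp: dist_commute)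
    have "proj q \<in> K" using proj_in_Sigma[OF card q(1)] q by (simp add: K_def sq_def)
    from ineqK[OF this] show ?thesis using q by (simp add: ext_def sq_def)
  qed
  define s0 where "s0 = sq p0"
  define z where "z = snd p0"
  have per: "t * pd (ext u) b p0 = fd s0 * (2 * (z \<bullet> snd b)) \<and>
     fdd s0 * (2 * (z \<bullet> snd b)) * (2 * (z \<bullet> snd b)) + fd s0 * (2 * (snd b \<bullet> snd b)) \<le> t * pd (pd (ext u) b) b p0"
    if b: "b \<in> Basis" for b
  proof -
    have nb1: "norm b = 1" using b by simp
    define c where "c = snd b"
    define sig where "sig h = (norm (z + h *\<^sub>R c))\<^sup>2" for h
    have sqh: "sq (p0 + h *\<^sub>R b) = sig h" for h by (simp add: sq_def sig_def z_def c_def)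
    have dsig: "(sig has_real_derivative (2 * (z \<bullet> c) + 2 * h * (c \<bullet> c))) (at h)" for h
      unfolding sig_def by (rule quad_deriv)
    have dist_h: "dist (p0 + h *\<^sub>R b) p0 = \<bar>h\<bar>" for h by (simp add: dist_norm nb1)
    have intube: "p0 + h *\<^sub>R b \<in> tube \<Omega>" if "\<bar>h\<bar> < \<delta>" for h
      using nb[of "p0 + h *\<^sub>R b"] that dist_h by simp
    have hp: "\<And>x. x \<in> tube \<Omega> \<Longrightarrow> has_pd (ext u) b x"
      and hpp: "\<And>x. x \<in> tube \<Omega> \<Longrightarrow> has_pd (pd (ext u) b) b x"
      using C2 b by (auto simp: C2_on_def)
    have p0t: "p0 \<in> tube \<Omega>" using intube[of 0] dpos by simp
    have res: "t * pd (ext u) b (p0 + 0 *\<^sub>R b) = fd (sig 0) * (2 * (z \<bullet> c) + 2 * 0 * (c \<bullet> c)) \<and>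
      fdd (sig 0) * (2 * (z \<bullet> c) + 2 * 0 * (c \<bullet> c)) * (2 * (z \<bullet> c) + 2 * 0 * (c \<bullet> c)) + fd (sig 0) * (2 * (c \<bullet> c))
        \<le> t * pd (pd (ext u) b) b p0"
    proof (rule oneD[OF dpos tpos])
      fix h :: real assume h: "\<bar>h\<bar> < \<delta>"
      have "(\<lambda>\<tau>. ext u (p0 + h *\<^sub>R b + \<tau> *\<^sub>R b)) field_differentiable (at 0)"
        using hp[OF intube[OF h]] by (simp add: has_pd_def)
      hence "((\<lambda>\<tau>. ext u (p0 + h *\<^sub>R b + \<tau> *\<^sub>R b)) has_real_derivative pd (ext u) b (p0 + h *\<^sub>R b)) (at 0)"
        unfolding pd_def by (simp add: DERIV_deriv_iff_field_differentiable)
      hence "((\<lambda>\<tau>. ext u (p0 + (\<tau> + h) *\<^sub>R b)) has_real_derivative pd (ext u) b (p0 + h *\<^sub>R b)) (at 0)"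
        by (simp add: scaleR_add_left add_ac)
      then show "((\<lambda>h. ext u (p0 + h *\<^sub>R b)) has_real_derivative pd (ext u) b (p0 + h *\<^sub>R b)) (at h)"
        using DERIV_shift[where f="\<lambda>h. ext u (p0 + h *\<^sub>R b)" and x=0 and z=h] by simp
    next
      have "(\<lambda>\<tau>. pd (ext u) b (p0 + \<tau> *\<^sub>R b)) field_differentiable (at 0)"
        using hpp[OF p0t] by (simp add: has_pd_def)
      then show "((\<lambda>h. pd (ext u) b (p0 + h *\<^sub>R b)) has_real_derivative pd (pd (ext u) b) b p0) (at 0)"
        unfolding pd_def[of "pd (ext u) b"] by (simp add: DERIV_deriv_iff_field_differentiable)
    next
      fix h :: real
      show "((\<lambda>h. f (sig h)) has_real_derivative fd (sig h) * (2 * (z \<bullet> c) + 2 * h * (c \<bullet> c))) (at h)"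
        by (rule DERIV_chain2[OF df dsig])
    next
      have "((\<lambda>h. fd (sig h) * (2 * (z \<bullet> c) + 2 * h * (c \<bullet> c))) has_real_derivative
          (fdd (sig 0) * (2 * (z \<bullet> c) + 2 * 0 * (c \<bullet> c))) * (2 * (z \<bullet> c) + 2 * 0 * (c \<bullet> c)) + fd (sig 0) * (2 * (c \<bullet> c))) (at 0)"
        by (rule DERIV_mult[OF DERIV_chain2[OF df1 dsig], THEN DERIV_cong])
           (auto intro!: derivative_eq_intros)
      then show "((\<lambda>h. fd (sig h) * (2 * (z \<bullet> c) + 2 * h * (c \<bullet> c))) has_real_derivative
          fdd (sig 0) * (2 * (z \<bullet> c) + 2 * 0 * (c \<bullet> c)) * (2 * (z \<bullet> c) + 2 * 0 * (c \<bullet> c)) + fd (sig 0) * (2 * (c \<bullet> c))) (at 0)"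
        by simp
    next
      fix h :: real assume h: "\<bar>h\<bar> < \<delta>"
      show "f (sig h) \<le> t * ext u (p0 + h *\<^sub>R b)"
        using nb[of "p0 + h *\<^sub>R b"] h dist_h sqh by simp
    next
      show "f (sig 0) = t * ext u (p0 + 0 *\<^sub>R b)"
        using eq0 eu[OF p0S] sqh[of 0] by simp
    qed
    have "sig 0 = s0" by (simp add: sig_def s0_def sq_def z_def)
    then show ?thesis using res by (simp add: c_def)
  qed
  have zz: "(\<Sum>i\<in>Basis. (z \<bullet> i) * (z \<bullet> i)) = s0"
    using euclidean_inner[of z z] by (simp add: s0_def sq_def z_def power2_norm_eq_inner)
  have ii: "(\<Sum>i\<in>(Basis::(real^'b) set). i \<bullet> i) = real CARD('b)"
    by simp
  have S1: "t * eLap (ext u) p0 \<ge> 4 * s0 * fdd s0 + 2 * real CARD('b) * fd s0"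
  proof -
    have "(\<Sum>b\<in>(Basis::('a,'b) pt set). fdd s0 * (2 * (z \<bullet> snd b)) * (2 * (z \<bullet> snd b)) + fd s0 * (2 * (snd b \<bullet> snd b)))
       = 4 * fdd s0 * (\<Sum>i\<in>Basis. (z \<bullet> i) * (z \<bullet> i)) + 2 * fd s0 * (\<Sum>i\<in>(Basis::(real^'b) set). i \<bullet> i)"
      by (simp add: sum_Basis_prod_real sum.distrib sum_distrib_left algebra_simps)
    also have "\<dots> = 4 * s0 * fdd s0 + 2 * real CARD('b) * fd s0" using zz ii by simp
    finally have e: "(\<Sum>b\<in>(Basis::('a,'b) pt set). fdd s0 * (2 * (z \<bullet> snd b)) * (2 * (z \<bullet> snd b)) + fd s0 * (2 * (snd b \<bullet> snd b)))
       = 4 * s0 * fdd s0 + 2 * real CARD('b) * fd s0" .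
    have "(\<Sum>b\<in>(Basis::('a,'b) pt set). fdd s0 * (2 * (z \<bullet> snd b)) * (2 * (z \<bullet> snd b)) + fd s0 * (2 * (snd b \<bullet> snd b)))
       \<le> (\<Sum>b\<in>Basis. t * pd (pd (ext u) b) b p0)"
      using per by (meson sum_mono)
    also have "\<dots> = t * eLap (ext u) p0" by (simp add: eLap_def sum_distrib_left)
    finally show ?thesis using e by simp
  qed
  have S2: "t * pos_grad (ext u) p0 = 2 * fd s0 * s0"
  proof -
    have "t * pos_grad (ext u) p0 = (\<Sum>b\<in>Basis. (p0 \<bullet> b) * (t * pd (ext u) b p0))"
      by (simp add: pos_grad_def sum_distrib_left algebra_simps)
    also have "\<dots> = (\<Sum>b\<in>Basis. (p0 \<bullet> b) * (fd s0 * (2 * (z \<bullet> snd b))))"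
      using per by (intro sum.cong) auto
    also have "\<dots> = 2 * fd s0 * (\<Sum>i\<in>Basis. (z \<bullet> i) * (z \<bullet> i))"
      by (simp add: sum_Basis_prod_real sum_distrib_left algebra_simps z_def)
    finally show ?thesis using zz by simp
  qed
  have "Lop u p0 = 0" using KO' p0K by (intro Lu) auto
  hence "eLap (ext u) p0 - 1/2 * pos_grad (ext u) p0 + u p0 = 0"
    by (simp add: Lop_def normA2_half[OF card])
  hence "t * eLap (ext u) p0 - 1/2 * (t * pos_grad (ext u) p0) + t * u p0 = 0"
    by (metis (no_types, opaque_lifting) mult.left_commute mult_zero_right distrib_left right_diff_distrib)
  hence "4 * s0 * fdd s0 + 2 * real CARD('b) * fd s0 - fd s0 * s0 + f s0 \<le> 0"
    using S1 S2 eq0 by (simp add: s0_def)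
  moreover have "s0 \<ge> 0" by (simp add: s0_def sq_def)
  ultimately show False using Lpos[of s0] fs0 by (simp add: s0_def algebra_simps)
qed

lemma tube_eq:
  assumes card: "CARD('a::finite) \<ge> 2"
  shows "tube {p \<in> (Sigma :: ('a::finite, 'b::finite) pt set). P (rad p)} = {p. fst p \<noteq> 0 \<and> P (norm (snd p))}"
  using proj_in_Sigma[OF card] by (auto simp: tube_def rad_def)

lemma unit_pt:
  assumes card: "CARD('a::finite) \<ge> 2"
  shows "\<exists>p::('a::finite,'b::finite) pt. p \<in> Sigma \<and> snd p = x"
proof -
  obtain e :: "real^'a" where e: "e \<in> Basis" using nonempty_Basis by blast
  have "(sphR TYPE(('a,'b) pt) *\<^sub>R e, x) \<in> Sigma"
    using sphR_pos[OF card, where 'b='b] e by (simp add: Sigma_def)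
  thus ?thesis by force
qed

theorem proposition4p12:
  assumes "CARD('a::finite) \<ge> 2" and "CARD('b::finite) \<ge> 2"
  shows "stable {p \<in> (Sigma :: ('a, 'b) pt set). rad p < sqrt (2 * real CARD('b))}
       \<and> stable {p \<in> (Sigma :: ('a, 'b) pt set). rad p > sqrt (2 * real CARD('b))}
       \<and> (\<forall>C>0. stable {p \<in> (Sigma :: ('a, 'b) pt set). rad p < C}
                \<and> stable {p \<in> (Sigma :: ('a, 'b) pt set). rad p > C}
                \<longrightarrow> C = sqrt (2 * real CARD('b)))"
proof -
  note card = assms(1)
  define m where "m = real CARD('b)"
  have m: "m \<ge> 2" using assms(2) by (simp add: m_def)
  define c0 where "c0 = sqrt (2 * m)"
  have c0: "c0 > 0" "c0\<^sup>2 = 2 * m" using m by (auto simp: c0_def)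
  have rad0: "rad p \<ge> 0" for p :: "('a,'b) pt" by (simp add: rad_def)
  have st1: "stable {p \<in> (Sigma :: ('a, 'b) pt set). rad p < c0}"
  proof (rule stable_quad[OF card refl, where \<alpha> = "2*m" and \<beta> = "-1"])
    have "tube {p \<in> (Sigma :: ('a, 'b) pt set). rad p < c0} = {p. fst p \<noteq> 0 \<and> (\<lambda>r. r < c0) (norm (snd p))}"
      using tube_eq[OF card, where P="\<lambda>r. r < c0" and 'b='b] by simp
    then show "open (tube {p \<in> (Sigma :: ('a, 'b) pt set). rad p < c0})"
      apply simp
      by (intro open_Collect_conj open_Collect_neq open_Collect_less continuous_intros)
    show "2 * m + 2 * - 1 * real CARD('b) = 0" by (simp add: m_def)
    fix p :: "('a,'b) pt" assume "p \<in> {p \<in> Sigma. rad p < c0}"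
    hence "rad p < c0" by simp
    hence "(rad p)\<^sup>2 < c0\<^sup>2" using rad0[of p] by (intro power_strict_mono) auto
    thus "0 < 2 * m + - 1 * (rad p)\<^sup>2" using c0 by simp
  qed
  have st2: "stable {p \<in> (Sigma :: ('a, 'b) pt set). rad p > c0}"
  proof (rule stable_quad[OF card refl, where \<alpha> = "-2*m" and \<beta> = "1"])
    have "tube {p \<in> (Sigma :: ('a, 'b) pt set). rad p > c0} = {p. fst p \<noteq> 0 \<and> (\<lambda>r. r > c0) (norm (snd p))}"
      using tube_eq[OF card, where P="\<lambda>r. r > c0" and 'b='b] by simp
    then show "open (tube {p \<in> (Sigma :: ('a, 'b) pt set). rad p > c0})"
      apply simp
      by (intro open_Collect_conj open_Collect_neq open_Collect_less continuous_intros)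
    show "-2 * m + 2 * 1 * real CARD('b) = 0" by (simp add: m_def)
    fix p :: "('a,'b) pt" assume "p \<in> {p \<in> Sigma. rad p > c0}"
    hence "rad p > c0" by simp
    hence "(rad p)\<^sup>2 > c0\<^sup>2" using c0 by (intro power_strict_mono) auto
    thus "0 < -2 * m + 1 * (rad p)\<^sup>2" using c0 by simp
  qed
  have uniq: "C = c0" if C: "C > 0" and s1: "stable {p \<in> (Sigma :: ('a, 'b) pt set). rad p < C}"
    and s2: "stable {p \<in> (Sigma :: ('a, 'b) pt set). rad p > C}" for C
  proof (rule ccontr)
    assume "C \<noteq> c0"
    hence "C > c0 \<or> C < c0" by linarith
    thus False
    proof
      assume Cg: "C > c0"
      have "c0\<^sup>2 < C\<^sup>2" using Cg c0 by (intro power_strict_mono) auto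
      hence C2: "C\<^sup>2 > 2 * m" using c0 by simp
      define a where "a = (2 * m + C\<^sup>2) / 2"
      obtain p1 :: "('a,'b) pt" where p1: "p1 \<in> Sigma" "snd p1 = 0" using unit_pt[OF card] by blast
      show False
      proof (rule key[where f = "\<lambda>s. a - s" and fd = "\<lambda>s. -1" and fdd = "\<lambda>s. 0"
            and lo = "-1" and hi = a and pq = p1, OF card _ _ _ _ _ _ _ _ _ s1])
        show "((\<lambda>s. a - s) has_real_derivative -1) (at s)" for s by (auto intro!: derivative_eq_intros)
        show "((\<lambda>s. -1) has_real_derivative 0) (at s)" for s :: real by (auto intro!: derivative_eq_intros)
        show "4 * s * 0 + (2 * real CARD('b) - s) * - 1 + (a - s) > 0" for s
          using C2 by (simp add: a_def m_def)
        show "-1 < s \<and> s < a" if "s \<ge> 0" "a - s > 0" for s using that by simp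
        show "{p \<in> (Sigma::('a,'b) pt set). - 1 \<le> (norm (snd p))\<^sup>2 \<and> (norm (snd p))\<^sup>2 \<le> a} \<subseteq> {p \<in> Sigma. rad p < C}"
        proof
          fix p :: "('a,'b) pt" assume p: "p \<in> {p \<in> Sigma. - 1 \<le> (norm (snd p))\<^sup>2 \<and> (norm (snd p))\<^sup>2 \<le> a}"
          hence "(rad p)\<^sup>2 < C\<^sup>2" using C2 by (simp add: rad_def a_def)
          hence "rad p < C" using C rad0[of p] by (meson power_less_imp_less_base less_le)
          thus "p \<in> {p \<in> Sigma. rad p < C}" using p by simp
        qed
        show "p1 \<in> Sigma" "-1 \<le> (norm (snd p1))\<^sup>2" "(norm (snd p1))\<^sup>2 \<le> a" "a - (norm (snd p1))\<^sup>2 > 0"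
          using p1 C2 m by (auto simp: a_def)
      qed
    next
      assume Cl: "C < c0"
      have "C\<^sup>2 < c0\<^sup>2" using Cl C by (intro power_strict_mono) auto
      hence C2: "C\<^sup>2 < 2 * m" using c0 by simp
      define a where "a = (2 * m + C\<^sup>2) / 2"
      have a: "a > C\<^sup>2" "a < 2 * m" "a \<ge> 0" using C2 m by (auto simp: a_def intro: add_nonneg_nonneg)
      define b where "b = (4 + 2 * m)\<^sup>2 / (2 * m - a) + a + 1"
      have bpos: "(4 + 2 * m)\<^sup>2 / (2 * m - a) \<ge> 0" using a by simp
      hence ab: "a < b" by (simp add: b_def)
      have bK: "b * (2 * m - a) = (4 + 2 * m)\<^sup>2 + (a + 1) * (2 * m - a)"
        using a by (simp add: b_def field_simps)
      have K0: "2 * m * a + b * (2 * m - a) > (4 + 2 * m)\<^sup>2"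
      proof -
        have "(a + 1) * (2 * m - a) > 0" using a by simp
        moreover have "2 * m * a \<ge> 0" using a m by simp
        ultimately show ?thesis using bK by linarith
      qed
      define y where "y = sqrt ((a + b) / 2)"
      have y2: "y\<^sup>2 = (a + b) / 2" using a ab by (simp add: y_def)
      obtain e :: "real^'b" where e: "e \<in> Basis" using nonempty_Basis by blast
      obtain p1 :: "('a,'b) pt" where p1: "p1 \<in> Sigma" "snd p1 = y *\<^sub>R e" using unit_pt[OF card] by blast
      have np1: "(norm (snd p1))\<^sup>2 = (a + b) / 2" using p1 e y2 by simp
      show False
      proof (rule key[OF card _ _ _ _ _ _ _ _ _ s2, where f = "\<lambda>s. (s - a) * (b - s)" and fd = "\<lambda>s. a + b - 2 * s"
            and fdd = "\<lambda>s. -2" and lo = a and hi = b and pq = p1])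
        show "((\<lambda>s. (s - a) * (b - s)) has_real_derivative a + b - 2 * s) (at s)" for s
          by (auto intro!: derivative_eq_intros simp: algebra_simps)
        show "((\<lambda>s. a + b - 2 * s) has_real_derivative -2) (at s)" for s :: real
          by (auto intro!: derivative_eq_intros)
        show "4 * s * -2 + (2 * real CARD('b) - s) * (a + b - 2 * s) + (s - a) * (b - s) > 0" for s
        proof -
          have "4 * s * -2 + (2 * real CARD('b) - s) * (a + b - 2 * s) + (s - a) * (b - s)
              = (s - (4 + 2 * m))\<^sup>2 - (4 + 2 * m)\<^sup>2 + (2 * m * a + b * (2 * m - a))"
            by (simp add: m_def power2_eq_square algebra_simps)
          moreover have "(s - (4 + 2 * m))\<^sup>2 \<ge> 0" by simp
          ultimately show ?thesis using K0 by linarith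
        qed
        show "a < s \<and> s < b" if "s \<ge> 0" "(s - a) * (b - s) > 0" for s
          using that ab by (auto simp: zero_less_mult_iff)
        show "{p \<in> (Sigma::('a,'b) pt set). a \<le> (norm (snd p))\<^sup>2 \<and> (norm (snd p))\<^sup>2 \<le> b} \<subseteq> {p \<in> Sigma. rad p > C}"
        proof
          fix p :: "('a,'b) pt" assume p: "p \<in> {p \<in> Sigma. a \<le> (norm (snd p))\<^sup>2 \<and> (norm (snd p))\<^sup>2 \<le> b}"
          hence "C\<^sup>2 < (rad p)\<^sup>2" using a by (simp add: rad_def)
          hence "C < rad p" using C rad0[of p] by (meson power_less_imp_less_base less_le)
          thus "p \<in> {p \<in> Sigma. rad p > C}" using p by simp
        qed
        show "p1 \<in> Sigma" "a \<le> (norm (snd p1))\<^sup>2" "(norm (snd p1))\<^sup>2 \<le> b" "((norm (snd p1))\<^sup>2 - a) * (b - (norm (snd p1))\<^sup>2) > 0"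
          using p1 np1 ab by auto
      qed
    qed
  qed
  show ?thesis using st1 st2 uniq by (simp add: c0_def m_def)
qed

end
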